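(* Let $\mathcal{X}$ be a set, let $r:\mathcal{X}\to\mathbb{R}$ be a measurable function, and let $p$ be a probability distribution on $\mathcal{X}$ such that $\mathbb{E}_{j\sim p}[\exp(r(j))]<\infty$. For $x\in\mathcal{X}$ define $$P(y=1\mid x)=\mathbb{E}_{j\sim p}\left[\frac{\exp(r(x))}{\exp(r(x))+\exp(r(j))}\right],\qquad l(x)=\log\frac{P(y=1\mid x)}{1-P(y=1\mid x)}.$$ Then with $C=\log\big(\mathbb{E}_{j\sim p}[\exp(r(j))]\big)$, for every $x\in\mathcal{X}$, $$l(x)\ge r(x)-C.$$
   Context: This models a binary classifier (logit $l$) trained on Bradley–Terry preference data with underlying reward $r$, where the positive-class probability of $x$ equals the expected Bradley–Terry probability that $x$ is preferred over a random competitor $j\sim p$. *)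

theory Defs
  imports "HOL-Probability.Probability"
begin

definition bt_prob :: "'a measure \<Rightarrow> ('a \<Rightarrow> real) \<Rightarrow> 'a \<Rightarrow> real" where
  "bt_prob p r x = (\<integral>j. exp (r x) / (exp (r x) + exp (r j)) \<partial>p)"

definition bt_logit :: "'a measure \<Rightarrow> ('a \<Rightarrow> real) \<Rightarrow> 'a \<Rightarrow> real" where
  "bt_logit p r x = ln (bt_prob p r x / (1 - bt_prob p r x))"

end

theory Submission
  imports Defs
begin

lemma tangent_ineq:
  fixes a b m :: real
  assumes "a > 0" "b > 0" "m > 0"
  shows "a/(a+b) \<ge> a/(a+m) - a/(a+m)^2 * (b - m)"
proof -
  have "a/(a+b) - (a/(a+m) - a/(a+m)^2 * (b - m)) = a*(b-m)^2/((a+b)*(a+m)^2)"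
  proof -
    have "a+b \<noteq> 0" "a+m \<noteq> 0" using assms by auto
    then show ?thesis by (simp add: divide_simps) (simp add: algebra_simps power2_eq_square)
  qed
  moreover have "a*(b-m)^2/((a+b)*(a+m)^2) \<ge> 0" using assms by simp
  ultimately show ?thesis by linarith
qed

theorem mainTheorem2:
  fixes p :: "'a measure" and r :: "'a \<Rightarrow> real" and x :: 'a
  assumes "prob_space p"
    and "r \<in> borel_measurable p"
    and "integrable p (\<lambda>j. exp (r j))"
    and "x \<in> space p"
  shows "bt_logit p r x \<ge> r x - ln (\<integral>j. exp (r j) \<partial>p)"
proof -
  interpret prob_space p by fact
  note rm[measurable] = assms(2)
  define a where "a = exp (r x)"
  define m where "m = (\<integral>j. exp (r j) \<partial>p)"
  have a0: "a > 0" unfolding a_def by simp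
  have ae0: "\<And>j. a + exp (r j) > 0" using a0 by (simp add: add_pos_pos)
  have m0: "m > 0"
  proof -
    have "(\<integral>j. 0 \<partial>p) < m" unfolding m_def
      by (rule integral_less_AE_space) (auto simp: assms(3) emeasure_space_1)
    then show ?thesis by simp
  qed
  have gi: "integrable p (\<lambda>j. a/(a+exp (r j)))"
    by (rule integrable_const_bound[where B=1]) (use a0 in \<open>auto intro!: AE_I2 simp: divide_le_eq_1 add_pos_pos\<close>)
  have hi: "integrable p (\<lambda>j. exp (r j)/(a+exp (r j)))"
    by (rule integrable_const_bound[where B=1]) (use a0 in \<open>auto intro!: AE_I2 simp: divide_le_eq_1 add_pos_pos\<close>)
  define P where "P = (\<integral>j. a/(a+exp (r j)) \<partial>p)"
  define Q where "Q = (\<integral>j. exp (r j)/(a+exp (r j)) \<partial>p)"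
  have PQ: "P + Q = 1"
  proof -
    have "P + Q = (\<integral>j. a/(a+exp (r j)) + exp (r j)/(a+exp (r j)) \<partial>p)"
      unfolding P_def Q_def by (rule Bochner_Integration.integral_add[symmetric, OF gi hi])
    also have "\<dots> = (\<integral>j. 1 \<partial>p)"
      by (rule Bochner_Integration.integral_cong[OF refl]) (metis ae0 add_divide_distrib divide_self less_irrefl)
    finally show ?thesis by (simp add: prob_space)
  qed
  have Q0: "Q > 0"
  proof -
    have "(\<integral>j. 0 \<partial>p) < Q" unfolding Q_def
      by (rule integral_less_AE_space) (use ae0 hi in \<open>auto intro!: AE_I2 divide_pos_pos simp: emeasure_space_1\<close>)
    then show ?thesis by simp
  qed
  define c1 where "c1 = a/(a+m)"
  define c2 where "c2 = a/(a+m)^2"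
  have Pge: "P \<ge> c1"
  proof -
    have ri: "integrable p (\<lambda>j. c1 + c2 * m - c2 * exp (r j))"
      using assms(3) by auto
    have "(\<integral>j. c1 + c2 * m - c2 * exp (r j) \<partial>p) \<le> P" unfolding P_def
    proof (rule integral_mono[OF ri gi])
      fix j assume "j \<in> space p"
      show "c1 + c2 * m - c2 * exp (r j) \<le> a / (a + exp (r j))"
        using tangent_ineq[OF a0 exp_gt_zero[of "r j"] m0]
        unfolding c1_def[symmetric] c2_def[symmetric] by (simp add: right_diff_distrib)
    qed
    moreover have "(\<integral>j. c1 + c2 * m - c2 * exp (r j) \<partial>p) = c1"
      using assms(3) by (simp add: m_def prob_space)
    ultimately show ?thesis by simp
  qed
  have Qle: "Q \<le> m/(a+m)"
  proof -
    have "Q = 1 - P" using PQ by simp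
    moreover have "a \<le> P * (a+m)" using Pge a0 m0 unfolding c1_def by (simp add: field_simps)
    ultimately have "Q * (a+m) \<le> m" by (simp add: left_diff_distrib)
    then show ?thesis using a0 m0 by (simp add: field_simps)
  qed
  have "a/m \<le> P/Q"
  proof -
    have am: "a + m \<noteq> 0" "m \<noteq> 0" using a0 m0 by auto
    have "a/m = c1 / (m/(a+m))" unfolding c1_def using am by (simp add: divide_simps)
    also have "\<dots> \<le> P / (m/(a+m))" using Pge a0 m0 by (simp add: divide_right_mono)
    also have "\<dots> \<le> P / Q"
      using Pge Q0 Qle a0 m0 order_trans[OF _ Pge, of 0] unfolding c1_def
      by (intro divide_left_mono) auto
    finally show ?thesis .
  qed
  then have "ln (a/m) \<le> ln (P/Q)" using a0 m0 by (intro ln_mono) auto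
  moreover have "ln (a/m) = r x - ln m" using a0 m0 by (simp add: ln_div a_def)
  moreover have "bt_logit p r x = ln (P/Q)"
  proof -
    have "Q = 1 - P" using PQ by simp
    moreover have "bt_prob p r x = P" unfolding bt_prob_def P_def a_def ..
    ultimately show ?thesis unfolding bt_logit_def by simp
  qed
  ultimately show ?thesis unfolding m_def by simp
qed

end
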